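(* Consider the plant $\dot x=f(x,u)$ with $f$ satisfying Assumption 1, a DT control law $U:\mathbb{R}^n\times[0,\infty)\to\mathbb{R}^m$, and $u_c(x):=U(x,0)$ satisfying Assumption 2. Suppose $U$ is StL and $(U_c,U)$ is StC with $U_c(x,T):=u_c(x)$. Then $H^e$ is EPC with $\bar F^e_U$, where $H^e(x,T)$ is the time-$T$ value of the solution of $\dot x=h(x):=f(x,u_c(x))$ from $x$, and $\bar F^e_U(x,T):=F^e(x,U(x,T),T)$.
   Context: Assumption 1: $f(0,0)=0$ and for every $M,M_u\ge0$ there is $L>0$ with $|f(x,u)-f(y,v)|\le L(|x-y|+|u-v|)$ for $|x|,|y|\le M$, $|u|,|v|\le M_u$. Assumption 2: $u_c(0)=0$ and for every $M\ge0$ there is $L>0$ with $|u_c(x)-u_c(y)|\le L|x-y|$ for $|x|,|y|\le M$. $F^e(x,u,T)$: time-$T$ value of the solution of $\dot z=f(z,u)$, $u$ constant, $z(0)=x$. StL: for each $M\ge0$ there exist $K(M)>0$, $T^*(M)>0$ ($T^*$ nonincreasing) with $U(0,T)=0$ and $|U(x,T)-U(y,T)|\le K|x-y|$ for $|x|,|y|\le M$, $T\in[0,T^* )$. StC: $(U,V)$ is StC if for each $M\ge0$ there exist $\rho\in\mathcal{K}_\infty$, $T^*(M)>0$ with $|U(x,T)-V(x,T)|\le\rho(T)|x|$ for $|x|\le M$, $T\in[0,T^* )$. EPC: $\bar F^a$ is EPC with $\bar F^b$ if for each $M\ge0$ there exist $K(M)>0$, $T^*(M)>0$, $\rho\in\mathcal{K}_\infty$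 with $|\bar F^a(x,T)-\bar F^b(y,T)|\le(1+KT)|x-y|+T\rho(T)\max\{|x|,|y|\}$ for all $|x|,|y|\le M$, $T\in(0,T^* )$. *)

theory Defs
  imports "HOL-Analysis.Analysis"
begin

definition class_K_inf :: "(real \<Rightarrow> real) \<Rightarrow> bool" where
  "class_K_inf \<rho> \<longleftrightarrow> continuous_on {0..} \<rho> \<and> \<rho> 0 = 0 \<and>
     strict_mono_on {0..} \<rho> \<and> filterlim \<rho> at_top at_top"

text \<open>Time-T value of the solution of z' = g z, z 0 = x (unique under local Lipschitz).\<close>
definition ode_flow :: "('a::euclidean_space \<Rightarrow> 'a) \<Rightarrow> 'a \<Rightarrow> real \<Rightarrow> 'a" where
  "ode_flow g x T = (THE v. \<exists>z. z 0 = x \<and>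
     (\<forall>t\<in>{0..T}. (z has_vector_derivative g (z t)) (at t within {0..T})) \<and> z T = v)"

definition F_e :: "('a::euclidean_space \<Rightarrow> 'b \<Rightarrow> 'a) \<Rightarrow> 'a \<Rightarrow> 'b \<Rightarrow> real \<Rightarrow> 'a" where
  "F_e f x u T = ode_flow (\<lambda>z. f z u) x T"

definition assumption1 :: "('a::euclidean_space \<Rightarrow> 'b::euclidean_space \<Rightarrow> 'a) \<Rightarrow> bool" where
  "assumption1 f \<longleftrightarrow> f 0 0 = 0 \<and>
    (\<forall>M\<ge>0. \<forall>Mu\<ge>0. \<exists>L>0. \<forall>x y u v. norm x \<le> M \<longrightarrow> norm y \<le> M \<longrightarrow> norm u \<le> Mu \<longrightarrow> norm v \<le> Mu \<longrightarrow>
       norm (f x u - f y v) \<le> L * (norm (x - y) + norm (u - v)))"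

definition assumption2 :: "('a::euclidean_space \<Rightarrow> 'b::euclidean_space) \<Rightarrow> bool" where
  "assumption2 uc \<longleftrightarrow> uc 0 = 0 \<and>
    (\<forall>M\<ge>0. \<exists>L>0. \<forall>x y. norm x \<le> M \<longrightarrow> norm y \<le> M \<longrightarrow> norm (uc x - uc y) \<le> L * norm (x - y))"

definition StL :: "('a::euclidean_space \<Rightarrow> real \<Rightarrow> 'b::euclidean_space) \<Rightarrow> bool" where
  "StL U \<longleftrightarrow> (\<exists>K Tstar :: real \<Rightarrow> real. antimono_on {0..} Tstar \<and>
     (\<forall>M\<ge>0. K M > 0 \<and> Tstar M > 0 \<and>
        (\<forall>T. 0 \<le> T \<and> T < Tstar M \<longrightarrow> U 0 T = 0 \<and>
           (\<forall>x y. norm x \<le> M \<longrightarrow> norm y \<le> M \<longrightarrow> norm (U x T - U y T) \<le> K M * norm (x - y)))))"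

definition StC :: "('a::euclidean_space \<Rightarrow> real \<Rightarrow> 'b::euclidean_space) \<Rightarrow> ('a \<Rightarrow> real \<Rightarrow> 'b) \<Rightarrow> bool" where
  "StC U V \<longleftrightarrow> (\<forall>M\<ge>0. \<exists>\<rho> Tstar. class_K_inf \<rho> \<and> Tstar > 0 \<and>
     (\<forall>x T. norm x \<le> M \<longrightarrow> 0 \<le> T \<longrightarrow> T < Tstar \<longrightarrow> norm (U x T - V x T) \<le> \<rho> T * norm x))"

definition EPC :: "('a::real_normed_vector \<Rightarrow> real \<Rightarrow> 'a) \<Rightarrow> ('a \<Rightarrow> real \<Rightarrow> 'a) \<Rightarrow> bool" where
  "EPC Fa Fb \<longleftrightarrow> (\<forall>M\<ge>0. \<exists>K Tstar \<rho>. K > 0 \<and> Tstar > 0 \<and> class_K_inf \<rho> \<and>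
     (\<forall>x y T. norm x \<le> M \<longrightarrow> norm y \<le> M \<longrightarrow> 0 < T \<longrightarrow> T < Tstar \<longrightarrow>
        norm (Fa x T - Fb y T) \<le> (1 + K * T) * norm (x - y) + T * \<rho> T * max (norm x) (norm y)))"

end

theory Submission
  imports Defs
begin

lemma mvt_bound:
  fixes d :: "real \<Rightarrow> 'a::euclidean_space"
  assumes "0 \<le> t" "continuous_on {0..t} d"
    and "\<And>s. s \<in> {0<..<t} \<Longrightarrow> (d has_vector_derivative d' s) (at s)"
    and "\<And>s. s \<in> {0<..<t} \<Longrightarrow> norm (d' s) \<le> C"
  shows "norm (d t - d 0) \<le> C * t"
proof (cases "t = 0")
  case True then show ?thesis by simp
next
  case False
  then have "0 < t" using assms(1) by simp
  from mvt_general[OF this assms(2), of "\<lambda>s h. h *\<^sub>R d' s"]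
  obtain s where s: "s \<in> {0<..<t}" "norm (d t - d 0) \<le> norm ((t - 0) *\<^sub>R d' s)"
    using assms(3) unfolding has_vector_derivative_def by auto
  have "norm ((t - 0) *\<^sub>R d' s) = t * norm (d' s)" using \<open>0 < t\<close> by simp
  also have "\<dots> \<le> t * C" using assms(4)[OF s(1)] \<open>0 < t\<close> by simp
  finally show ?thesis using s(2) by (simp add: mult.commute)
qed

lemma comp_lemma:
  fixes z w :: "real \<Rightarrow> 'a::euclidean_space"
  assumes T: "0 \<le> T" and A: "0 \<le> A" "A * T \<le> 1/2" and B: "0 \<le> B"
    and cz: "continuous_on {0..T} z" and cw: "continuous_on {0..T} w"
    and dz: "\<And>s. s \<in> {0<..<T} \<Longrightarrow> (z has_vector_derivative z' s) (at s)"
    and dw: "\<And>s. s \<in> {0<..<T} \<Longrightarrow> (w has_vector_derivative w' s) (at s)"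
    and est: "\<And>s. s \<in> {0<..<T} \<Longrightarrow> norm (z' s - w' s) \<le> A * norm (z s - w s) + B"
  shows "norm (z T - w T) \<le> (1 + 2 * A * T) * (norm (z 0 - w 0) + T * B)"
proof -
  define e where "e t = norm (z t - w t)" for t
  have ce: "continuous_on {0..T} e" unfolding e_def
    by (intro continuous_intros cz cw)
  obtain t1 where t1: "t1 \<in> {0..T}" "\<And>s. s \<in> {0..T} \<Longrightarrow> e s \<le> e t1"
    using continuous_attains_sup[OF compact_Icc _ ce] T by auto
  define m where "m = e t1"
  have m0: "0 \<le> m" unfolding m_def e_def by simp
  have key: "e t \<le> e 0 + t * (A * m + B)" if t: "t \<in> {0..T}" for t
  proof -
    have "norm ((z - w) t - (z - w) 0) \<le> (A * m + B) * t"
    proof (rule mvt_bound[where d' = "\<lambda>s. z' s - w' s"])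
      show "0 \<le> t" using t by simp
      show "continuous_on {0..t} (z - w)" unfolding fun_diff_def
        by (intro continuous_intros continuous_on_subset[OF cz] continuous_on_subset[OF cw]) (use t in auto)
      fix s assume s: "s \<in> {0<..<t}"
      then have sT: "s \<in> {0<..<T}" using t by auto
      show "((z - w) has_vector_derivative z' s - w' s) (at s)" unfolding fun_diff_def
        by (intro derivative_intros dz[OF sT] dw[OF sT])
      have "e s \<le> m" unfolding m_def using t1(2)[of s] sT by auto
      then have "A * e s \<le> A * m" using A(1) by (rule mult_left_mono)
      then show "norm (z' s - w' s) \<le> A * m + B" using est[OF sT]
        unfolding e_def by linarith
    qed
    then have "norm ((z t - w t) - (z 0 - w 0)) \<le> (A * m + B) * t" by simp
    then show ?thesis unfolding e_def using norm_triangle_ineq2[of "z t - w t" "z 0 - w 0"]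
      by (simp add: mult.commute)
  qed
  have "m \<le> e 0 + t1 * (A * m + B)" using key[OF t1(1)] m_def by simp
  also have "\<dots> \<le> e 0 + T * (A * m + B)" using t1(1) A(1) B m0
    by (intro add_left_mono mult_right_mono) auto
  finally have m1: "m * (1 - A * T) \<le> e 0 + T * B" by (simp add: algebra_simps)
  have "m \<le> m * ((1 + 2 * A * T) * (1 - A * T))"
  proof -
    have "0 \<le> (A * T) * (1 - 2 * (A * T))" using A T by simp
    then have "1 \<le> (1 + 2 * A * T) * (1 - A * T)" by (simp add: algebra_simps)
    then show ?thesis using m0 by (simp add: mult_le_cancel_left1)
  qed
  also have "\<dots> = (1 + 2 * A * T) * (m * (1 - A * T))" by simp
  also have "\<dots> \<le> (1 + 2 * A * T) * (e 0 + T * B)"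
    using m1 A T by (intro mult_left_mono) auto
  finally have "m \<le> (1 + 2 * A * T) * (e 0 + T * B)" .
  moreover have "e T \<le> m" unfolding m_def using t1(2) T by auto
  ultimately show ?thesis unfolding e_def by simp
qed

lemma sol_props:
  fixes z :: "real \<Rightarrow> 'a::euclidean_space"
  assumes "\<And>t. t \<in> {0..T} \<Longrightarrow> (z has_vector_derivative h t) (at t within {0..T})"
  shows "continuous_on {0..T} z" "\<And>t. t \<in> {0<..<T} \<Longrightarrow> (z has_vector_derivative h t) (at t)"
proof -
  show "continuous_on {0..T} z" using assms by (rule continuous_on_vector_derivative)
  fix t assume t: "t \<in> {0<..<T}"
  then have "at t within {0..T} = at t" by (intro at_within_interior) auto
  then show "(z has_vector_derivative h t) (at t)" using assms[of t] t by auto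
qed

lemma exit_lemma:
  fixes w :: "real \<Rightarrow> 'a::euclidean_space"
  assumes T: "0 \<le> T" and G: "0 \<le> G" and small: "norm (w 0) + G * T < R"
    and bnd: "\<And>v. norm v \<le> R \<Longrightarrow> norm (g v) \<le> G"
    and cw: "continuous_on {0..T} w"
    and dw: "\<And>s. s \<in> {0<..<T} \<Longrightarrow> (w has_vector_derivative g (w s)) (at s)"
  shows "\<And>t. t \<in> {0..T} \<Longrightarrow> norm (w t) < R"
proof (rule ccontr)
  fix t assume t: "t \<in> {0..T}" and nt: "\<not> norm (w t) < R"
  define A where "A = {0..T} \<inter> (\<lambda>t. norm (w t)) -` {R..}"
  have "continuous_on {0..T} (\<lambda>t. norm (w t))" by (intro continuous_intros cw)
  then have clA: "closed A" unfolding A_def by (intro continuous_closed_preimage) auto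
  have tA: "t \<in> A" using t nt unfolding A_def by auto
  have bA: "bdd_below A" unfolding A_def by (rule bdd_belowI[of _ 0]) auto
  define t0 where "t0 = Inf A"
  have t0A: "t0 \<in> A" unfolding t0_def using closed_contains_Inf[OF _ bA clA] tA by auto
  have t0T: "t0 \<in> {0..T}" and Rt0: "R \<le> norm (w t0)" using t0A unfolding A_def by auto
  have below: "norm (w s) < R" if "s \<in> {0..T}" "s < t0" for s
  proof (rule ccontr)
    assume "\<not> norm (w s) < R"
    then have "s \<in> A" using that unfolding A_def by auto
    then have "t0 \<le> s" unfolding t0_def using bA by (rule cInf_lower)
    then show False using that by simp
  qed
  have "norm (w t0 - w 0) \<le> G * t0"
  proof (rule mvt_bound[where d' = "\<lambda>s. g (w s)"])
    show "0 \<le> t0" using t0T by simp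
    show "continuous_on {0..t0} w" using t0T by (intro continuous_on_subset[OF cw]) auto
    fix s assume s: "s \<in> {0<..<t0}"
    then have sT: "s \<in> {0<..<T}" using t0T by auto
    show "(w has_vector_derivative g (w s)) (at s)" using dw[OF sT] .
    show "norm (g (w s)) \<le> G" using bnd below[of s] s sT by auto
  qed
  then have "norm (w t0) \<le> norm (w 0) + G * t0" using norm_triangle_ineq2[of "w t0" "w 0"] by simp
  also have "\<dots> \<le> norm (w 0) + G * T" using G t0T by (simp add: mult_left_mono)
  finally show False using small Rt0 by simp
qed

lemma existence:
  fixes g :: "'a::euclidean_space \<Rightarrow> 'a"
  assumes R: "0 < R" and L: "0 \<le> L"
    and lip: "\<And>a b. norm a \<le> R \<Longrightarrow> norm b \<le> R \<Longrightarrow> norm (g a - g b) \<le> L * norm (a - b)"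
    and bnd: "\<And>v. norm v \<le> R \<Longrightarrow> norm (g v) \<le> G"
    and small: "norm x + G * T < R" and T: "0 \<le> T" and LT: "L * T < 1"
  shows "\<exists>z. z 0 = x \<and> (\<forall>t\<in>{0..T}. (z has_vector_derivative g (z t)) (at t within {0..T}))"
proof -
  have "norm (g 0) \<le> G" by (rule bnd) (use R in simp)
  then have G: "0 \<le> G" using norm_ge_zero[of "g 0"] by linarith
  define S where "S = cball (0::'a) R"
  have S: "closed S" "S \<noteq> {}" "convex S" unfolding S_def using R by auto
  define cp where "cp = closest_point S"
  have cp_norm: "norm (cp v) \<le> R" for v
    using closest_point_in_set[OF S(1,2), of v] unfolding cp_def S_def by auto
  have cplip: "norm (cp a - cp b) \<le> norm (a - b)" for a b
    using closest_point_lipschitz[OF S(3,1,2), of a b] unfolding cp_def dist_norm .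
  define gt where "gt v = g (cp v)" for v
  have gtlip: "norm (gt a - gt b) \<le> L * norm (a - b)" for a b
  proof -
    have "norm (gt a - gt b) \<le> L * norm (cp a - cp b)" unfolding gt_def by (rule lip[OF cp_norm cp_norm])
    also have "\<dots> \<le> L * norm (a - b)" using L cplip by (rule mult_left_mono[rotated])
    finally show ?thesis .
  qed
  have gtb: "norm (gt v) \<le> G" for v unfolding gt_def by (rule bnd[OF cp_norm])
  have "L-lipschitz_on UNIV gt" unfolding lipschitz_on_def dist_norm using L gtlip by auto
  then have gtc: "continuous_on UNIV gt" by (rule lipschitz_on_continuous_on)
  define c where "c t = max 0 (min T t)" for t :: real
  have cc: "continuous_on UNIV c" unfolding c_def by (intro continuous_intros)
  have cT: "c t \<in> {0..T}" for t unfolding c_def using T by auto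
  define F where "F \<phi> t = x + integral {0..c t} (\<lambda>s. gt (apply_bcontfun \<phi> s))"
    for \<phi> :: "real \<Rightarrow>\<^sub>C 'a" and t
  have hc: "continuous_on UNIV (\<lambda>s. gt (apply_bcontfun \<phi> s))" for \<phi> :: "real \<Rightarrow>\<^sub>C 'a"
    by (rule continuous_on_compose2[OF gtc continuous_on_apply_bcontfun]) auto
  have Ider: "((\<lambda>u. integral {0..u} (\<lambda>s. gt (apply_bcontfun \<phi> s))) has_vector_derivative
      gt (apply_bcontfun \<phi> t)) (at t within {0..T})" if "t \<in> {0..T}" for \<phi> :: "real \<Rightarrow>\<^sub>C 'a" and t
    by (rule integral_has_vector_derivative[OF continuous_on_subset[OF hc] that]) auto
  have Ic: "continuous_on {0..T} (\<lambda>u. integral {0..u} (\<lambda>s. gt (apply_bcontfun \<phi> s)))"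
    for \<phi> :: "real \<Rightarrow>\<^sub>C 'a"
    by (rule continuous_on_vector_derivative[OF Ider])
  have Ib: "norm (integral {0..c t} (\<lambda>s. gt (apply_bcontfun \<phi> s))) \<le> G * T" for \<phi> :: "real \<Rightarrow>\<^sub>C 'a" and t
  proof -
    have "norm (integral {0..c t} (\<lambda>s. gt (apply_bcontfun \<phi> s))) \<le> G * (c t - 0)"
      using cT[of t] by (intro integral_bound continuous_on_subset[OF hc] gtb) auto
    also have "\<dots> \<le> G * T" using cT[of t] G by (simp add: mult_left_mono)
    finally show ?thesis .
  qed
  have Fb: "F \<phi> \<in> bcontfun" for \<phi>
  proof (rule bcontfun_normI)
    have "continuous_on UNIV (\<lambda>t. integral {0..c t} (\<lambda>s. gt (apply_bcontfun \<phi> s)))"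
      by (rule continuous_on_compose2[OF Ic[where \<phi>=\<phi>] cc]) (use cT in auto)
    then show "continuous_on UNIV (F \<phi>)" unfolding F_def by (intro continuous_intros)
    fix t show "norm (F \<phi> t) \<le> norm x + G * T" unfolding F_def
      by (rule order_trans[OF norm_triangle_ineq add_left_mono[OF Ib]])
  qed
  define P where "P \<phi> = Bcontfun (F \<phi>)" for \<phi>
  have PF: "apply_bcontfun (P \<phi>) = F \<phi>" for \<phi> unfolding P_def using Bcontfun_inverse[OF Fb] .
  have contr: "dist (P \<phi>) (P \<psi>) \<le> (L * T) * dist \<phi> \<psi>" for \<phi> \<psi>
  proof (rule dist_bound)
    fix t
    let ?h1 = "\<lambda>s. gt (apply_bcontfun \<phi> s)" and ?h2 = "\<lambda>s. gt (apply_bcontfun \<psi> s)"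
    have "dist (P \<phi> t) (P \<psi> t) = norm (integral {0..c t} ?h1 - integral {0..c t} ?h2)"
      unfolding PF F_def dist_norm by simp
    also have "\<dots> = norm (integral {0..c t} (\<lambda>s. ?h1 s - ?h2 s))"
      by (subst integral_diff) (auto intro!: integrable_continuous_real continuous_on_subset[OF hc])
    also have "\<dots> \<le> (L * dist \<phi> \<psi>) * (c t - 0)"
    proof (rule integral_bound)
      show "0 \<le> c t" using cT[of t] by simp
      show "continuous_on {0..c t} (\<lambda>s. ?h1 s - ?h2 s)"
        by (intro continuous_intros continuous_on_subset[OF hc]) auto
      fix s
      have "norm (?h1 s - ?h2 s) \<le> L * norm (\<phi> s - \<psi> s)" by (rule gtlip)
      also have "\<dots> \<le> L * dist \<phi> \<psi>" using dist_bounded[where f=\<phi> and g=\<psi> and x=s] L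
        unfolding dist_norm by (simp add: mult_left_mono)
      finally show "norm (?h1 s - ?h2 s) \<le> L * dist \<phi> \<psi>" .
    qed
    also have "\<dots> = L * dist \<phi> \<psi> * c t" by simp
    also have "\<dots> \<le> L * dist \<phi> \<psi> * T" using cT[of t] L
      by (intro mult_left_mono) auto
    also have "\<dots> = (L * T) * dist \<phi> \<psi>" by simp
    finally show "dist (P \<phi> t) (P \<psi> t) \<le> (L * T) * dist \<phi> \<psi>" .
  qed
  obtain \<phi> where fixP: "P \<phi> = \<phi>"
    using banach_fix_type[of "L * T" P] L T LT contr by (auto simp: zero_le_mult_iff)
  define z where "z = apply_bcontfun \<phi>"
  have zF: "z t = F \<phi> t" for t unfolding z_def using PF[of \<phi>] fixP by simp
  have zI: "z t = x + integral {0..t} (\<lambda>s. gt (z s))" if "t \<in> {0..T}" for t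
  proof -
    have "c t = t" using that unfolding c_def by auto
    then show ?thesis using zF[of t] unfolding F_def z_def by simp
  qed
  show ?thesis
  proof (intro exI conjI ballI)
    show "z 0 = x" using zI[of 0] T by simp
    fix t assume t: "t \<in> {0..T}"
    have "norm (z t) \<le> norm x + G * T" unfolding zF F_def
      by (rule order_trans[OF norm_triangle_ineq add_left_mono[OF Ib]])
    then have "norm (z t) \<le> R" using small by simp
    then have "cp (z t) = z t" unfolding cp_def S_def by (intro closest_point_self) auto
    then have gz: "gt (z t) = g (z t)" unfolding gt_def by simp
    have D: "((\<lambda>u. integral {0..u} (\<lambda>s. gt (z s))) has_vector_derivative gt (z t)) (at t within {0..T})"
      unfolding z_def by (rule Ider[OF t])
    have "((\<lambda>u. x + integral {0..u} (\<lambda>s. gt (z s))) has_vector_derivative gt (z t)) (at t within {0..T})"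
      using has_vector_derivative_add[OF has_vector_derivative_const D] by simp
    then show "(z has_vector_derivative g (z t)) (at t within {0..T})"
      unfolding gz by (rule has_vector_derivative_transform[OF t zI, rotated])
  qed
qed

lemma flow_lemma:
  fixes g :: "'a::euclidean_space \<Rightarrow> 'a"
  assumes R: "0 < R" and L: "0 \<le> L"
    and lip: "\<And>a b. norm a \<le> R \<Longrightarrow> norm b \<le> R \<Longrightarrow> norm (g a - g b) \<le> L * norm (a - b)"
    and bnd: "\<And>v. norm v \<le> R \<Longrightarrow> norm (g v) \<le> G"
    and small: "norm x + G * T < R" and T: "0 \<le> T" and LT: "L * T \<le> 1/2"
  shows "\<exists>z. z 0 = x \<and> (\<forall>t\<in>{0..T}. (z has_vector_derivative g (z t)) (at t within {0..T}))
           \<and> (\<forall>t\<in>{0..T}. norm (z t) < R) \<and> ode_flow g x T = z T"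
proof -
  have "norm (g 0) \<le> G" by (rule bnd) (use R in simp)
  then have G: "0 \<le> G" using norm_ge_zero[of "g 0"] by linarith
  have stay: "\<forall>t\<in>{0..T}. norm (w t) < R"
    if w0: "w 0 = x" and dw: "\<forall>t\<in>{0..T}. (w has_vector_derivative g (w t)) (at t within {0..T})" for w
  proof
    fix t assume t: "t \<in> {0..T}"
    have dw': "\<And>t. t \<in> {0..T} \<Longrightarrow> (w has_vector_derivative g (w t)) (at t within {0..T})"
      using dw by auto
    show "norm (w t) < R"
      by (rule exit_lemma[OF T G _ bnd sol_props(1)[OF dw'] sol_props(2)[OF dw'] t]) (use small w0 in auto)
  qed
  obtain z where z0: "z 0 = x" and dz: "\<forall>t\<in>{0..T}. (z has_vector_derivative g (z t)) (at t within {0..T})"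
    using existence[OF R L lip bnd small T] LT by force
  have uniq: "w T = z T"
    if w0: "w 0 = x" and dw: "\<forall>t\<in>{0..T}. (w has_vector_derivative g (w t)) (at t within {0..T})" for w
  proof -
    have dw': "\<And>t. t \<in> {0..T} \<Longrightarrow> (w has_vector_derivative g (w t)) (at t within {0..T})"
      using dw by auto
    have dz': "\<And>t. t \<in> {0..T} \<Longrightarrow> (z has_vector_derivative g (z t)) (at t within {0..T})"
      using dz by auto
    have sw: "\<forall>t\<in>{0..T}. norm (w t) < R" by (rule stay[OF w0 dw])
    have sz: "\<forall>t\<in>{0..T}. norm (z t) < R" by (rule stay[OF z0 dz])
    have "norm (z T - w T) \<le> (1 + 2 * L * T) * (norm (z 0 - w 0) + T * 0)"
    proof (rule comp_lemma[OF T L _ _ sol_props(1)[OF dz'] sol_props(1)[OF dw'] sol_props(2)[OF dz'] sol_props(2)[OF dw']])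
      show "L * T \<le> 1/2" by (rule LT)
      fix s assume s: "s \<in> {0<..<T}"
      have "norm (g (z s) - g (w s)) \<le> L * norm (z s - w s)"
        using sw sz s by (intro lip) (auto simp: less_imp_le)
      then show "norm (g (z s) - g (w s)) \<le> L * norm (z s - w s) + 0" by simp
    qed simp
    then show ?thesis using z0 w0 by simp
  qed
  have "ode_flow g x T = z T" unfolding ode_flow_def
  proof (rule the_equality)
    show "\<exists>w. w 0 = x \<and> (\<forall>t\<in>{0..T}. (w has_vector_derivative g (w t)) (at t within {0..T})) \<and> w T = z T"
      using z0 dz by blast
    fix v assume "\<exists>w. w 0 = x \<and> (\<forall>t\<in>{0..T}. (w has_vector_derivative g (w t)) (at t within {0..T})) \<and> w T = v"
    then show "v = z T" using uniq by blast
  qed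
  then show ?thesis using z0 dz stay[OF z0 dz] by blast
qed

lemma K_nonneg:
  assumes "class_K_inf \<rho>" "0 \<le> T"
  shows "0 \<le> \<rho> T"
proof -
  have sm: "strict_mono_on {0..} \<rho>" and r0: "\<rho> 0 = 0" using assms(1) unfolding class_K_inf_def by auto
  show ?thesis
  proof (cases "T = 0")
    case True then show ?thesis using r0 by simp
  next
    case False
    then have "\<rho> 0 < \<rho> T" using assms(2) by (intro strict_mono_onD[OF sm]) auto
    then show ?thesis using r0 by simp
  qed
qed

lemma K_comb:
  assumes K: "class_K_inf \<rho>" and a: "0 < a" and b: "0 < b"
  shows "class_K_inf (\<lambda>T. a * T + b * \<rho> T)"
proof -
  have c: "continuous_on {0..} \<rho>" and r0: "\<rho> 0 = 0" and sm: "strict_mono_on {0..} \<rho>"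
    using K unfolding class_K_inf_def by auto
  have "continuous_on {0..} (\<lambda>T. a * T + b * \<rho> T)" by (intro continuous_intros c)
  moreover have "strict_mono_on {0..} (\<lambda>T. a * T + b * \<rho> T)"
  proof (rule strict_mono_onI)
    fix r s :: real assume "r \<in> {0..}" "s \<in> {0..}" "r < s"
    then have "\<rho> r < \<rho> s" by (intro strict_mono_onD[OF sm])
    then have "b * \<rho> r < b * \<rho> s" using b by simp
    moreover have "a * r < a * s" using a \<open>r < s\<close> by simp
    ultimately show "a * r + b * \<rho> r < a * s + b * \<rho> s" by simp
  qed
  moreover have "filterlim (\<lambda>T. a * T + b * \<rho> T) at_top at_top"
  proof (rule filterlim_at_top_mono)
    show "filterlim (\<lambda>T::real. a * T) at_top at_top"
      using a by (intro filterlim_tendsto_pos_mult_at_top[OF tendsto_const a filterlim_ident])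
    show "\<forall>\<^sub>F T in at_top. a * T \<le> a * T + b * \<rho> T"
      using eventually_ge_at_top[of "0::real"]
      by eventually_elim (use K_nonneg[OF K] b in simp)
  qed
  ultimately show ?thesis unfolding class_K_inf_def using r0 by simp
qed

lemma small_T1:
  fixes G T :: real
  assumes "0 \<le> G" "0 \<le> T" "T < 1 / (2 * (G + 1))"
  shows "G * T \<le> 1/2"
proof -
  have "T * (2 * (G + 1)) < 1" using assms by (simp add: less_divide_eq mult.commute)
  then show ?thesis using assms by (simp add: algebra_simps)
qed

lemma small_T2:
  fixes A T :: real
  assumes "0 < A" "T < 1 / (2 * A)"
  shows "A * T \<le> 1/2"
proof -
  have "T * (2 * A) < 1" using assms by (simp add: less_divide_eq mult.commute)
  then show ?thesis by (simp add: algebra_simps)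
qed

theorem proposition1:
  fixes f :: "'a::euclidean_space \<Rightarrow> 'b::euclidean_space \<Rightarrow> 'a"
    and U :: "'a \<Rightarrow> real \<Rightarrow> 'b"
  assumes "assumption1 f"
    and "assumption2 (\<lambda>x. U x 0)"
    and "StL U"
    and "StC (\<lambda>x T. U x 0) U"
  shows "EPC (\<lambda>x T. ode_flow (\<lambda>z. f z (U z 0)) x T) (\<lambda>x T. F_e f x (U x T) T)"
proof -
  have f00: "f 0 0 = 0" and flip: "\<And>M Mu. 0 \<le> M \<Longrightarrow> 0 \<le> Mu \<Longrightarrow> \<exists>L>0. \<forall>x y u v. norm x \<le> M \<longrightarrow> norm y \<le> M \<longrightarrow> norm u \<le> Mu \<longrightarrow> norm v \<le> Mu \<longrightarrow>
       norm (f x u - f y v) \<le> L * (norm (x - y) + norm (u - v))"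
    using assms(1) unfolding assumption1_def by auto
  have uc0: "U 0 0 = 0" and uclip: "\<And>M. 0 \<le> M \<Longrightarrow> \<exists>L>0. \<forall>x y. norm x \<le> M \<longrightarrow> norm y \<le> M \<longrightarrow> norm (U x 0 - U y 0) \<le> L * norm (x - y)"
    using assms(2) unfolding assumption2_def by auto
  obtain Kf Tsf :: "real \<Rightarrow> real" where StLp: "\<And>M. 0 \<le> M \<Longrightarrow> Kf M > 0 \<and> Tsf M > 0 \<and>
        (\<forall>T. 0 \<le> T \<and> T < Tsf M \<longrightarrow> U 0 T = 0 \<and>
           (\<forall>x y. norm x \<le> M \<longrightarrow> norm y \<le> M \<longrightarrow> norm (U x T - U y T) \<le> Kf M * norm (x - y)))"
    using assms(3) unfolding StL_def by blast
  show ?thesis unfolding EPC_def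
  proof (intro allI impI)
    fix M :: real assume M: "0 \<le> M"
    define R where "R = 2 * M + 1"
    have R: "0 < R" "M \<le> R" using M unfolding R_def by auto
    obtain Lc where Lc: "Lc > 0" and Lcl: "\<And>x y. norm x \<le> R \<Longrightarrow> norm y \<le> R \<Longrightarrow> norm (U x 0 - U y 0) \<le> Lc * norm (x - y)"
      using uclip[of R] R by auto
    define Km where "Km = Kf M"
    define Tsm where "Tsm = Tsf M"
    have Km: "Km > 0" and Tsm: "Tsm > 0" and StLT: "\<And>T. 0 \<le> T \<Longrightarrow> T < Tsm \<Longrightarrow> U 0 T = 0 \<and>
           (\<forall>x y. norm x \<le> M \<longrightarrow> norm y \<le> M \<longrightarrow> norm (U x T - U y T) \<le> Km * norm (x - y))"
      using StLp[OF M] unfolding Km_def Tsm_def by auto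
    obtain \<rho> Tc where \<rho>: "class_K_inf \<rho>" and Tc: "Tc > 0" and StCp: "\<And>x T. norm x \<le> M \<Longrightarrow> 0 \<le> T \<Longrightarrow> T < Tc \<Longrightarrow> norm (U x 0 - U x T) \<le> \<rho> T * norm x"
      using assms(4) M unfolding StC_def by blast
    define Mu where "Mu = Lc * R + Km * M"
    have Mu: "0 \<le> Mu" unfolding Mu_def using Lc Km R M by simp
    obtain Lf where Lf: "Lf > 0" and Lfl0: "\<forall>a b u v. norm a \<le> R \<longrightarrow> norm b \<le> R \<longrightarrow> norm u \<le> Mu \<longrightarrow> norm v \<le> Mu \<longrightarrow>
       norm (f a u - f b v) \<le> Lf * (norm (a - b) + norm (u - v))"
      using flip[of R Mu] R Mu by auto
    have Lfl: "\<And>a b u v. norm a \<le> R \<Longrightarrow> norm b \<le> R \<Longrightarrow> norm u \<le> Mu \<Longrightarrow> norm v \<le> Mu \<Longrightarrow>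
       norm (f a u - f b v) \<le> Lf * (norm (a - b) + norm (u - v))" using Lfl0 by blast
    define A where "A = Lf * (1 + Lc)"
    have A: "0 < A" "Lf \<le> A" unfolding A_def using Lf Lc by auto
    define G1 where "G1 = A * R"
    define G2 where "G2 = Lf * (R + Mu)"
    have G: "0 \<le> G1" "0 \<le> G2" unfolding G1_def G2_def using A R Lf Mu by auto
    define Ts where "Ts = min (min Tsm Tc) (min (1 / (2 * (G1 + 1))) (min (1 / (2 * (G2 + 1))) (1 / (2 * A))))"
    have Ts: "0 < Ts" unfolding Ts_def using Tsm Tc G A by auto
    define c1 where "c1 = 4 * Lf * Lc * Lf * (1 + Km)"
    define \<rho>' where "\<rho>' T = c1 * T + (2 * Lf) * \<rho> T" for T
    have K': "class_K_inf \<rho>'" unfolding \<rho>'_def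
      by (rule K_comb[OF \<rho>]) (use Lf Lc Km in \<open>auto simp: c1_def\<close>)
    have ucb: "norm (U a 0) \<le> Lc * norm a" if "norm a \<le> R" for a
      using Lcl[OF that, of 0] R uc0 by simp
    have ucMu: "norm (U a 0) \<le> Mu" if "norm a \<le> R" for a
    proof -
      have "norm (U a 0) \<le> Lc * R" using ucb[OF that] that Lc by (meson mult_left_mono less_imp_le order_trans)
      moreover have "0 \<le> Km * M" using Km M by simp
      ultimately show ?thesis unfolding Mu_def by linarith
    qed
    have main: "norm (ode_flow (\<lambda>z. f z (U z 0)) x T - F_e f y (U y T) T)
        \<le> (1 + 2 * A * T) * norm (x - y) + T * \<rho>' T * max (norm x) (norm y)"
      if x: "norm x \<le> M" and y: "norm y \<le> M" and T0: "0 < T" and TT: "T < Ts" for x y T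
    proof -
      have T: "0 \<le> T" using T0 by simp
      have TTsm: "T < Tsm" and TTc: "T < Tc" using TT unfolding Ts_def by auto
      have G1T: "G1 * T \<le> 1/2" using TT G T by (intro small_T1) (auto simp: Ts_def)
      have G2T: "G2 * T \<le> 1/2" using TT G T by (intro small_T1) (auto simp: Ts_def)
      have AT: "A * T \<le> 1/2" using TT A by (intro small_T2) (auto simp: Ts_def)
      have LfT: "Lf * T \<le> 1/2" using AT A(2) T by (meson mult_right_mono order_trans)
      define u where "u = U y T"
      have U0T: "U 0 T = 0" and ULip: "\<And>a b. norm a \<le> M \<Longrightarrow> norm b \<le> M \<Longrightarrow> norm (U a T - U b T) \<le> Km * norm (a - b)"
        using StLT[OF T TTsm] by auto
      have ub: "norm u \<le> Km * norm y" using ULip[OF y, of 0] M U0T unfolding u_def by simp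
      have uMu: "norm u \<le> Mu"
      proof -
        have "Km * norm y \<le> Km * M" using y Km by simp
        moreover have "0 \<le> Lc * R" using Lc R by simp
        ultimately show ?thesis using ub unfolding Mu_def by linarith
      qed
      have lip1: "norm (f a (U a 0) - f b (U b 0)) \<le> A * norm (a - b)" if "norm a \<le> R" "norm b \<le> R" for a b
      proof -
        have "norm (f a (U a 0) - f b (U b 0)) \<le> Lf * (norm (a - b) + norm (U a 0 - U b 0))"
          using that by (intro Lfl ucMu)
        also have "\<dots> \<le> Lf * (norm (a - b) + Lc * norm (a - b))"
          using Lcl[OF that] Lf by (intro mult_left_mono add_left_mono) auto
        also have "\<dots> = A * norm (a - b)" unfolding A_def by (simp add: algebra_simps)
        finally show ?thesis .
      qed
      have bnd1: "norm (f v (U v 0)) \<le> G1" if "norm v \<le> R" for v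
      proof -
        have "norm (f v (U v 0)) \<le> A * norm (v - 0)" using lip1[OF that, of 0] R uc0 f00 by simp
        also have "\<dots> \<le> A * R" using that A by simp
        finally show ?thesis unfolding G1_def .
      qed
      have lip2: "norm (f a u - f b u) \<le> Lf * norm (a - b)" if "norm a \<le> R" "norm b \<le> R" for a b
        using Lfl[OF that uMu uMu] by simp
      have fb: "norm (f a u) \<le> Lf * (norm a + norm u)" if "norm a \<le> R" for a
        using Lfl[OF that _ uMu, of 0 0] R Mu f00 by simp
      have bnd2: "norm (f v u) \<le> G2" if "norm v \<le> R" for v
      proof -
        have "norm (f v u) \<le> Lf * (norm v + norm u)" by (rule fb[OF that])
        also have "\<dots> \<le> Lf * (R + Mu)" using that uMu Lf by (intro mult_left_mono add_mono) auto
        finally show ?thesis unfolding G2_def .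
      qed
      have sm1: "norm x + G1 * T < R" using x G1T M unfolding R_def by simp
      have sm2: "norm y + G2 * T < R" using y G2T M unfolding R_def by simp
      obtain z where z0: "z 0 = x" and dz: "\<forall>t\<in>{0..T}. (z has_vector_derivative f (z t) (U (z t) 0)) (at t within {0..T})"
        and sz: "\<forall>t\<in>{0..T}. norm (z t) < R" and fz: "ode_flow (\<lambda>z. f z (U z 0)) x T = z T"
        using flow_lemma[where g="\<lambda>z. f z (U z 0)", OF R(1) less_imp_le[OF A(1)] lip1 bnd1 sm1 T AT] by blast
      obtain w where w0: "w 0 = y" and dw: "\<forall>t\<in>{0..T}. (w has_vector_derivative f (w t) u) (at t within {0..T})"
        and sw: "\<forall>t\<in>{0..T}. norm (w t) < R" and fw: "ode_flow (\<lambda>z. f z u) y T = w T"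
        using flow_lemma[where g="\<lambda>z. f z u", OF R(1) less_imp_le[OF Lf] lip2 bnd2 sm2 T LfT] by blast
      have Fw: "F_e f y (U y T) T = w T" unfolding F_e_def fw[symmetric] u_def ..
      have dz': "\<And>t. t \<in> {0..T} \<Longrightarrow> (z has_vector_derivative f (z t) (U (z t) 0)) (at t within {0..T})"
        using dz by auto
      have dw': "\<And>t. t \<in> {0..T} \<Longrightarrow> (w has_vector_derivative f (w t) u) (at t within {0..T})"
        using dw by auto
      define Bw where "Bw = Lf * (1 + Km) * norm y"
      have Bw: "0 \<le> Bw" unfolding Bw_def using Lf Km by simp
      have wbound: "norm (w t - y) \<le> 2 * T * Bw" if t: "t \<in> {0..T}" for t
      proof -
        have Lft: "Lf * t \<le> 1/2" using LfT t Lf by (meson atLeastAtMost_iff less_imp_le mult_left_mono order_trans)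
        have "norm (w t - (\<lambda>_. y) t) \<le> (1 + 2 * Lf * t) * (norm (w 0 - (\<lambda>_. y) 0) + t * Bw)"
        proof (rule comp_lemma[where z'="\<lambda>s. f (w s) u" and w'="\<lambda>s. 0"])
          show "0 \<le> t" "0 \<le> Lf" "Lf * t \<le> 1/2" "0 \<le> Bw" using t Lf Lft Bw by auto
          show "continuous_on {0..t} w" using t by (intro continuous_on_subset[OF sol_props(1)[OF dw']]) auto
          show "continuous_on {0..t} (\<lambda>_. y)" by simp
          fix s assume s: "s \<in> {0<..<t}"
          then have sT: "s \<in> {0<..<T}" using t by auto
          show "(w has_vector_derivative f (w s) u) (at s)" by (rule sol_props(2)[OF dw' sT])
          show "((\<lambda>_. y) has_vector_derivative 0) (at s)" by simp
          have ns: "norm (w s) \<le> R" using sw sT by (auto simp: less_imp_le)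
          have "norm (f (w s) u - 0) \<le> Lf * (norm (w s) + norm u)" using fb[OF ns] by simp
          also have "\<dots> \<le> Lf * (norm (w s - y) + norm y + Km * norm y)"
            using norm_triangle_sub[of "w s" y] ub Lf by (intro mult_left_mono) (auto simp: norm_minus_commute)
          also have "\<dots> = Lf * norm (w s - (\<lambda>_. y) s) + Bw" unfolding Bw_def by (simp add: algebra_simps)
          finally show "norm (f (w s) u - 0) \<le> Lf * norm (w s - (\<lambda>_. y) s) + Bw" .
        qed
        then have "norm (w t - y) \<le> (1 + 2 * Lf * t) * (t * Bw)" using w0 by simp
        also have "\<dots> \<le> 2 * (t * Bw)" using Lft t Bw by (intro mult_right_mono) auto
        also have "\<dots> \<le> 2 * (T * Bw)" using t Bw by (intro mult_left_mono mult_right_mono) auto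
        finally show ?thesis by simp
      qed
      define B0 where "B0 = Lf * (Lc * (2 * T * Bw) + \<rho> T * norm y)"
      have \<rho>T: "0 \<le> \<rho> T" using K_nonneg[OF \<rho> T] .
      have B0: "0 \<le> B0" unfolding B0_def using Lf Lc T Bw \<rho>T by simp
      have "norm (z T - w T) \<le> (1 + 2 * A * T) * (norm (z 0 - w 0) + T * B0)"
      proof (rule comp_lemma[OF T less_imp_le[OF A(1)] AT B0 sol_props(1)[OF dz'] sol_props(1)[OF dw'] sol_props(2)[OF dz'] sol_props(2)[OF dw']])
        fix s assume sT: "s \<in> {0<..<T}"
        have zs: "norm (z s) \<le> R" and ws: "norm (w s) \<le> R" using sz sw sT by (auto simp: less_imp_le)
        have e1: "norm (f (z s) (U (z s) 0) - f (w s) u) \<le> Lf * (norm (z s - w s) + norm (U (z s) 0 - u))"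
          by (rule Lfl[OF zs ws ucMu[OF zs] uMu])
        have e3: "norm (U (z s) 0 - U y 0) \<le> Lc * norm (z s - y)" using Lcl[OF zs] y R by simp
        have e4: "norm (U y 0 - u) \<le> \<rho> T * norm y" unfolding u_def using StCp[OF y T TTc] .
        have e6: "norm (w s - y) \<le> 2 * T * Bw" using wbound[of s] sT by simp
        have e5: "norm (z s - y) \<le> norm (z s - w s) + 2 * T * Bw"
          by (rule norm_diff_triangle_le[OF order_refl e6])
        have e7: "norm (U (z s) 0 - u) \<le> Lc * (norm (z s - w s) + 2 * T * Bw) + \<rho> T * norm y"
          by (rule norm_diff_triangle_le[OF order_trans[OF e3 mult_left_mono[OF e5]] e4]) (use Lc in simp)
        have "norm (f (z s) (U (z s) 0) - f (w s) u) \<le> Lf * (norm (z s - w s) + (Lc * (norm (z s - w s) + 2 * T * Bw) + \<rho> T * norm y))"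
          using e1 e7 Lf by (meson add_left_mono mult_left_mono less_imp_le order_trans)
        also have "\<dots> = A * norm (z s - w s) + B0" unfolding A_def B0_def by (simp add: algebra_simps)
        finally show "norm (f (z s) (U (z s) 0) - f (w s) u) \<le> A * norm (z s - w s) + B0" .
      qed
      then have "norm (z T - w T) \<le> (1 + 2 * A * T) * norm (x - y) + (1 + 2 * A * T) * (T * B0)"
        using z0 w0 by (simp add: distrib_left)
      also have "(1 + 2 * A * T) * (T * B0) \<le> 2 * (T * B0)" using AT T B0 by (intro mult_right_mono) auto
      also have "2 * (T * B0) = T * \<rho>' T * norm y" unfolding B0_def \<rho>'_def c1_def Bw_def by (simp add: algebra_simps)
      also have "\<dots> \<le> T * \<rho>' T * max (norm x) (norm y)"
        using K_nonneg[OF K' T] T by (intro mult_left_mono) auto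
      finally show ?thesis using fz Fw by simp
    qed
    show "\<exists>K Tstar \<rho>. K > 0 \<and> Tstar > 0 \<and> class_K_inf \<rho> \<and>
     (\<forall>x y T. norm x \<le> M \<longrightarrow> norm y \<le> M \<longrightarrow> 0 < T \<longrightarrow> T < Tstar \<longrightarrow>
        norm (ode_flow (\<lambda>z. f z (U z 0)) x T - F_e f y (U y T) T) \<le> (1 + K * T) * norm (x - y) + T * \<rho> T * max (norm x) (norm y))"
      by (intro exI[of _ "2 * A"] exI[of _ Ts] exI[of _ \<rho>'] conjI allI impI)
         (use A Ts K' main in \<open>auto simp: mult.assoc\<close>)
  qed
qed

end
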